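(* Assume [LJ1]–[LJ4] and additionally $J_1(\gamma)<0$, $J_2(\gamma)<0$, $J_2(\delta_1)<0$. Then: (i) $\tilde B_{IFJ}(n,1)=-J_0(\gamma)$ for all $n\in\{1,2,\dots\}\cup\{+\infty\}$; (ii) $\tilde B_{IFJ}(1,k)=B(\gamma)-\frac32J_0(\gamma)$ for all $k\in\{2,3,\dots\}\cup\{+\infty\}$; (iii) $\tilde B_{IFJ}(n,k)=B_{AIF}(n)$ for all $n,k\in\{2,3,\dots\}\cup\{+\infty\}$.
   Context: Potentials: $J_1,J_2:\mathbb R\to(-\infty,+\infty]$; $J_{CB}:=J_1+J_2$; $J_0(z):=J_2(z)+\frac12\inf\{J_1(z_1)+J_1(z_2):z_1+z_2=2z\}$; $J_0^{**}$ is the convex lower semicontinuous envelope of $J_0$. Hypotheses: [LJ1] $\{z:J_0(z)=J_0^{**}(z)\}\cap\{z:J_0\text{ is affine in a neighbourhood of }z\}=\emptyset$. [LJ2] for every $z$ with $J_0(z)=J_0^{**}(z)$, the set $\{(z_1,z_2):z_1+z_2=2z,\ J_0(z)=J_2(z)+\frac12(J_1(z_1)+J_1(z_2))\}$ has exactly one element. [LJ3] $J_1,J_2$ are $C^{1,\alpha}$ on their domains for some $0<\alpha\le1$, $J_0$ is $C^1$ on its domain, $\operatorname{dom}J_1=\operatorname{dom}J_2\supset(0,+\infty)$, $\lim_{z\to+\infty}J_j(z)=0$ ($j=1,2$) and $\lim_{z\to+\infty}J_0(z)=:J_0(+\infty)\in\mathbb R$. [LJ4] there is a convex $\Psi:\mathbb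 R\to[0,+\infty]$ with $\lim_{z\to-\infty}\Psi(z)/|z|=+\infty$ and constants $c_1,c_2>0$ with $c_1(\Psi(z)-1)\le J_j(z)\le c_2\max\{\Psi(z),|z|\}$ for all $z\in\mathbb R$, $j=1,2$; there are $\delta_1,\delta_2,\gamma>0$ with $\{\delta_j\}=\operatorname{argmin}J_j$ and $\{\gamma\}=\operatorname{argmin}J_0$; $J_j$ is strictly convex on $(-\infty,\delta_j)\cap\operatorname{dom}J_j$; $J_0(\gamma)<J_0(+\infty)$; and $J_0(z)=J_0^{**}(z)$ for all $z\le\gamma$. Boundary layer energies (with $\mathbb N=\{0,1,2,\dots\}$): $B(\gamma):=\inf_{N\in\mathbb N}\min\{\frac12J_1(v^1-v^0)+\sum_{i\ge0}[J_2(\frac{v^{i+2}-v^i}{2})+\frac12J_1(v^{i+2}-v^{i+1})+\frac12J_1(v^{i+1}-v^i)-J_0(\gamma)]:v:\mathbb N\to\mathbb R,\ v^0=0,\ v^{i+1}-v^i=\gamma\ \forall i\ge N\}$; for $m\in\mathbb N$, $B_{IF}(m):=\inf_{k\in\mathbb N}\min\{\frac12J_1(v^1-v^0)+\sum_{i=0}^{k-1}[J_2(\frac{v^{i+2}-v^i}{2})+\frac12J_1(v^{i+2}-v^{i+1})+\frac12J_1(v^{i+1}-v^i)-J_0(\gamma)]+\frac{2m+1}{2}(J_{CB}(v^{k+1}-v^k)-J_0(\gamma)):v:\mathbb N\to\mathbb R,\ v^0=0\}$, and $B_{IF}(+\infty):=B(\gamma)$; for $n\in\{1,2,\dots\}\cup\{+\infty\}$,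 $B_{AIF}(n):=B_{IF}(n-1)+B(\gamma)-2J_0(\gamma)$ (with $+\infty-1=+\infty$); for $n,k\in\{1,2,\dots\}\cup\{+\infty\}$, $\tilde B_{IFJ}(n,k):=\min\{B_{AIF}(n),\,B(\gamma)-(\frac12+n)J_0(\gamma),\,-kJ_0(\gamma)\}$. *)

theory Defs
  imports "HOL-Analysis.Analysis"
begin

text \<open>Potentials are maps real \<Rightarrow> ereal that never take the value minus infinity.\<close>

definition edom :: "(real \<Rightarrow> ereal) \<Rightarrow> real set" where
  "edom J = {z. J z < \<infinity>}"

definition J0 :: "(real \<Rightarrow> ereal) \<Rightarrow> (real \<Rightarrow> ereal) \<Rightarrow> real \<Rightarrow> ereal" where
  "J0 J1 J2 z = J2 z + ereal (1/2) *
     (INF p \<in> {p :: real \<times> real. fst p + snd p = 2 * z}. J1 (fst p) + J1 (snd p))"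

definition JCB :: "(real \<Rightarrow> ereal) \<Rightarrow> (real \<Rightarrow> ereal) \<Rightarrow> real \<Rightarrow> ereal" where
  "JCB J1 J2 z = J1 z + J2 z"

definition conv_env :: "(real \<Rightarrow> ereal) \<Rightarrow> real \<Rightarrow> ereal" where
  "conv_env f z = (SUP ab \<in> {ab :: real \<times> real. \<forall>x. ereal (fst ab * x + snd ab) \<le> f x}.
                     ereal (fst ab * z + snd ab))"

definition affine_near :: "(real \<Rightarrow> ereal) \<Rightarrow> real \<Rightarrow> bool" where
  "affine_near f z \<longleftrightarrow> (\<exists>e>0. \<exists>a b. \<forall>x. \<bar>x - z\<bar> < e \<longrightarrow> f x = ereal (a * x + b))"

definition C1alpha_on :: "real \<Rightarrow> (real \<Rightarrow> ereal) \<Rightarrow> real set \<Rightarrow> bool" where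
  "C1alpha_on \<alpha> f S \<longleftrightarrow> (\<exists>f'. (\<forall>z\<in>S. ((\<lambda>x. real_of_ereal (f x)) has_real_derivative f' z) (at z within S))
      \<and> (\<forall>K. compact K \<and> K \<subseteq> S \<longrightarrow> (\<exists>C. \<forall>x\<in>K. \<forall>y\<in>K. \<bar>f' x - f' y\<bar> \<le> C * \<bar>x - y\<bar> powr \<alpha>)))"

definition C1_on :: "(real \<Rightarrow> ereal) \<Rightarrow> real set \<Rightarrow> bool" where
  "C1_on f S \<longleftrightarrow> (\<exists>f'. (\<forall>z\<in>S. ((\<lambda>x. real_of_ereal (f x)) has_real_derivative f' z) (at z within S))
      \<and> continuous_on S f')"

definition econvex :: "(real \<Rightarrow> ereal) \<Rightarrow> bool" where
  "econvex f \<longleftrightarrow> (\<forall>x y t. 0 \<le> t \<and> t \<le> 1 \<longrightarrow>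
      f ((1 - t) * x + t * y) \<le> ereal (1 - t) * f x + ereal t * f y)"

definition estrict_convex_on :: "real set \<Rightarrow> (real \<Rightarrow> ereal) \<Rightarrow> bool" where
  "estrict_convex_on S f \<longleftrightarrow> (\<forall>x\<in>S. \<forall>y\<in>S. \<forall>t. x \<noteq> y \<and> 0 < t \<and> t < 1 \<longrightarrow>
      f ((1 - t) * x + t * y) < ereal (1 - t) * f x + ereal t * f y)"

definition LJ1 :: "(real \<Rightarrow> ereal) \<Rightarrow> (real \<Rightarrow> ereal) \<Rightarrow> bool" where
  "LJ1 J1 J2 \<longleftrightarrow> {z. J0 J1 J2 z = conv_env (J0 J1 J2) z} \<inter> {z. affine_near (J0 J1 J2) z} = {}"

definition LJ2 :: "(real \<Rightarrow> ereal) \<Rightarrow> (real \<Rightarrow> ereal) \<Rightarrow> bool" where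
  "LJ2 J1 J2 \<longleftrightarrow> (\<forall>z \<in> edom (J0 J1 J2). J0 J1 J2 z = conv_env (J0 J1 J2) z \<longrightarrow>
      (\<exists>!p :: real \<times> real. fst p + snd p = 2 * z \<and>
          J0 J1 J2 z = J2 z + ereal (1/2) * (J1 (fst p) + J1 (snd p))))"

definition LJ3 :: "(real \<Rightarrow> ereal) \<Rightarrow> (real \<Rightarrow> ereal) \<Rightarrow> bool" where
  "LJ3 J1 J2 \<longleftrightarrow>
     (\<exists>\<alpha>. 0 < \<alpha> \<and> \<alpha> \<le> 1 \<and> C1alpha_on \<alpha> J1 (edom J1) \<and> C1alpha_on \<alpha> J2 (edom J2))
     \<and> C1_on (J0 J1 J2) (edom (J0 J1 J2))
     \<and> edom J1 = edom J2 \<and> {0<..} \<subseteq> edom J1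
     \<and> (J1 \<longlongrightarrow> 0) at_top \<and> (J2 \<longlongrightarrow> 0) at_top
     \<and> (\<exists>L::real. (J0 J1 J2 \<longlongrightarrow> ereal L) at_top)"

text \<open>The value J0(+infinity) (meaningful under LJ3).\<close>
definition J0_infty :: "(real \<Rightarrow> ereal) \<Rightarrow> (real \<Rightarrow> ereal) \<Rightarrow> ereal" where
  "J0_infty J1 J2 = Lim at_top (J0 J1 J2)"

definition LJ4 :: "(real \<Rightarrow> ereal) \<Rightarrow> (real \<Rightarrow> ereal) \<Rightarrow> real \<Rightarrow> real \<Rightarrow> real \<Rightarrow> bool" where
  "LJ4 J1 J2 \<delta>1 \<delta>2 \<gamma> \<longleftrightarrow>
     (\<exists>\<Psi> :: real \<Rightarrow> ereal. (\<forall>z. 0 \<le> \<Psi> z) \<and> econvex \<Psi>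
        \<and> ((\<lambda>z. \<Psi> z / ereal \<bar>z\<bar>) \<longlongrightarrow> \<infinity>) at_bot
        \<and> (\<exists>c1 c2. c1 > 0 \<and> c2 > 0 \<and> (\<forall>z. \<forall>J \<in> {J1, J2}.
              ereal c1 * (\<Psi> z - 1) \<le> J z \<and> J z \<le> ereal c2 * max (\<Psi> z) (ereal \<bar>z\<bar>))))
     \<and> \<delta>1 > 0 \<and> \<delta>2 > 0 \<and> \<gamma> > 0
     \<and> (\<forall>z. z \<noteq> \<delta>1 \<longrightarrow> J1 \<delta>1 < J1 z)
     \<and> (\<forall>z. z \<noteq> \<delta>2 \<longrightarrow> J2 \<delta>2 < J2 z)
     \<and> (\<forall>z. z \<noteq> \<gamma> \<longrightarrow> J0 J1 J2 \<gamma> < J0 J1 J2 z)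
     \<and> estrict_convex_on ({..<\<delta>1} \<inter> edom J1) J1
     \<and> estrict_convex_on ({..<\<delta>2} \<inter> edom J2) J2
     \<and> J0 J1 J2 \<gamma> < J0_infty J1 J2
     \<and> (\<forall>z \<le> \<gamma>. J0 J1 J2 z = conv_env (J0 J1 J2) z)"

definition cellE :: "(real \<Rightarrow> ereal) \<Rightarrow> (real \<Rightarrow> ereal) \<Rightarrow> real \<Rightarrow> (nat \<Rightarrow> real) \<Rightarrow> nat \<Rightarrow> ereal" where
  "cellE J1 J2 \<gamma> v i = J2 ((v (i+2) - v i) / 2) + ereal (1/2) * J1 (v (i+2) - v (i+1))
      + ereal (1/2) * J1 (v (i+1) - v i) - J0 J1 J2 \<gamma>"

definition Bgam :: "(real \<Rightarrow> ereal) \<Rightarrow> (real \<Rightarrow> ereal) \<Rightarrow> real \<Rightarrow> ereal" where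
  "Bgam J1 J2 \<gamma> = (INF N :: nat. INF v \<in> {v :: nat \<Rightarrow> real. v 0 = 0 \<and> (\<forall>i \<ge> N. v (i+1) - v i = \<gamma>)}.
      ereal (1/2) * J1 (v 1 - v 0) + lim (\<lambda>n. \<Sum>i<n. cellE J1 J2 \<gamma> v i))"

definition BIF :: "(real \<Rightarrow> ereal) \<Rightarrow> (real \<Rightarrow> ereal) \<Rightarrow> real \<Rightarrow> enat \<Rightarrow> ereal" where
  "BIF J1 J2 \<gamma> m = (case m of
      enat m' \<Rightarrow> (INF k :: nat. INF v \<in> {v :: nat \<Rightarrow> real. v 0 = 0}.
          ereal (1/2) * J1 (v 1 - v 0) + (\<Sum>i<k. cellE J1 J2 \<gamma> v i)
          + ereal ((2 * real m' + 1) / 2) * (JCB J1 J2 (v (k+1) - v k) - J0 J1 J2 \<gamma>))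
    | \<infinity> \<Rightarrow> Bgam J1 J2 \<gamma>)"

definition BAIF :: "(real \<Rightarrow> ereal) \<Rightarrow> (real \<Rightarrow> ereal) \<Rightarrow> real \<Rightarrow> enat \<Rightarrow> ereal" where
  "BAIF J1 J2 \<gamma> n = BIF J1 J2 \<gamma> (n - 1) + Bgam J1 J2 \<gamma> - ereal 2 * J0 J1 J2 \<gamma>"

definition BIFJ :: "(real \<Rightarrow> ereal) \<Rightarrow> (real \<Rightarrow> ereal) \<Rightarrow> real \<Rightarrow> enat \<Rightarrow> enat \<Rightarrow> ereal" where
  "BIFJ J1 J2 \<gamma> n k = min (BAIF J1 J2 \<gamma> n)
      (min (Bgam J1 J2 \<gamma> - (ereal (1/2) + ereal_of_enat n) * J0 J1 J2 \<gamma>)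
           (- (ereal_of_enat k * J0 J1 J2 \<gamma>)))"

end

theory Submission
  imports Defs
begin

lemma eoe1 [simp]: "ereal_of_enat 1 = 1"
  by (simp add: one_enat_def)

lemma half_twice: "ereal (1/2) * (x + x) = (x::ereal)"
  by (cases x) auto

lemma ereal_bounded: "ereal p \<le> x \<Longrightarrow> x \<le> ereal q \<Longrightarrow> \<exists>r. x = ereal r \<and> p \<le> r \<and> r \<le> q"
  by (cases x) auto

lemma J0_le_JCB:
  assumes "\<forall>z. J1 z \<noteq> - \<infinity>"
  shows "J0 J1 J2 z \<le> JCB J1 J2 z"
proof -
  have "(INF p \<in> {p :: real \<times> real. fst p + snd p = 2 * z}. J1 (fst p) + J1 (snd p)) \<le> J1 z + J1 z"
    by (rule INF_lower2[of "(z,z)"]) auto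
  then have "ereal (1/2) * (INF p \<in> {p :: real \<times> real. fst p + snd p = 2 * z}. J1 (fst p) + J1 (snd p)) \<le> J1 z"
  proof -
    have "ereal (1/2) * (INF p \<in> {p :: real \<times> real. fst p + snd p = 2 * z}. J1 (fst p) + J1 (snd p)) \<le> ereal (1/2) * (J1 z + J1 z)"
      by (rule ereal_mult_left_mono) (use \<open>_ \<le> J1 z + J1 z\<close> in auto)
    then show ?thesis by (simp only: half_twice)
  qed
  from add_left_mono[OF this, of "J2 z"] show ?thesis unfolding J0_def JCB_def by (simp add: add.commute)
qed

lemma cell_ge:
  assumes "\<forall>z. J1 z \<noteq> - \<infinity>" "a + b = 2 * w"
  shows "J0 J1 J2 w \<le> J2 w + ereal (1/2) * J1 a + ereal (1/2) * J1 b"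
proof -
  have "(INF p \<in> {p :: real \<times> real. fst p + snd p = 2 * w}. J1 (fst p) + J1 (snd p)) \<le> J1 a + J1 b"
    by (rule INF_lower2[of "(a,b)"]) (use assms in auto)
  then have "ereal (1/2) * (INF p \<in> {p :: real \<times> real. fst p + snd p = 2 * w}. J1 (fst p) + J1 (snd p)) \<le> ereal (1/2) * (J1 a + J1 b)"
    by (rule ereal_mult_left_mono) auto
  also have "ereal (1/2) * (J1 a + J1 b) = ereal (1/2) * J1 a + ereal (1/2) * J1 b"
    using assms(1)[rule_format, of a] assms(1)[rule_format, of b] by (cases "J1 a"; cases "J1 b") auto
  finally show ?thesis unfolding J0_def by (simp add: add_mono add.assoc)
qed

theorem lemma5p3:
  fixes J1 J2 :: "real \<Rightarrow> ereal" and \<delta>1 \<delta>2 \<gamma> :: real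
  assumes "\<forall>z. J1 z \<noteq> - \<infinity>" and "\<forall>z. J2 z \<noteq> - \<infinity>"
    and "LJ1 J1 J2" and "LJ2 J1 J2" and "LJ3 J1 J2" and "LJ4 J1 J2 \<delta>1 \<delta>2 \<gamma>"
    and "J1 \<gamma> < 0" and "J2 \<gamma> < 0" and "J2 \<delta>1 < 0"
  shows "(\<forall>n::enat. n \<ge> 1 \<longrightarrow> BIFJ J1 J2 \<gamma> n 1 = - J0 J1 J2 \<gamma>)
       \<and> (\<forall>k::enat. k \<ge> 2 \<longrightarrow> BIFJ J1 J2 \<gamma> 1 k = Bgam J1 J2 \<gamma> - ereal (3/2) * J0 J1 J2 \<gamma>)
       \<and> (\<forall>n k :: enat. n \<ge> 2 \<longrightarrow> k \<ge> 2 \<longrightarrow> BIFJ J1 J2 \<gamma> n k = BAIF J1 J2 \<gamma> n)"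
proof -
  have min1: "\<forall>z. z \<noteq> \<delta>1 \<longrightarrow> J1 \<delta>1 < J1 z" using assms(6) unfolding LJ4_def by blast
  have min0: "\<forall>z. z \<noteq> \<gamma> \<longrightarrow> J0 J1 J2 \<gamma> < J0 J1 J2 z" using assms(6) unfolding LJ4_def by blast
  have fin0: "J0 J1 J2 \<gamma> < J0_infty J1 J2" using assms(6) unfolding LJ4_def by blast
  have conv: "J0 J1 J2 \<gamma> = conv_env (J0 J1 J2) \<gamma>" using assms(6) unfolding LJ4_def by blast
  have m1: "J1 \<delta>1 \<le> J1 z" for z using min1 by (cases "z = \<delta>1") (auto intro: less_imp_le)
  have m0: "J0 J1 J2 \<gamma> \<le> J0 J1 J2 z" for z using min0 by (cases "z = \<gamma>") (auto intro: less_imp_le)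
  obtain c1 where c1: "J1 \<gamma> = ereal c1" "c1 < 0" using assms(1,7) by (cases "J1 \<gamma>") auto
  obtain c2 where c2: "J2 \<gamma> = ereal c2" "c2 < 0" using assms(2,8) by (cases "J2 \<gamma>") auto
  obtain a where a: "J1 \<delta>1 = ereal a" "a \<le> c1" using m1[of \<gamma>] assms(1) c1 by (cases "J1 \<delta>1") auto
  have dom: "\<gamma> \<in> edom (J0 J1 J2)" unfolding edom_def using fin0 by auto
  from assms(4) dom conv obtain p where p: "fst p + snd p = 2 * \<gamma>"
      "J0 J1 J2 \<gamma> = J2 \<gamma> + ereal (1/2) * (J1 (fst p) + J1 (snd p))"
    and uq: "\<And>q. fst q + snd q = 2 * \<gamma> \<and> J0 J1 J2 \<gamma> = J2 \<gamma> + ereal (1/2) * (J1 (fst q) + J1 (snd q)) \<Longrightarrow> q = p"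
    unfolding LJ2_def by metis
  have "(snd p, fst p) = p" by (rule uq) (use p in \<open>auto simp: add.commute\<close>)
  then have "snd p = fst p" by (metis fst_conv)
  then have "fst p = \<gamma>" "snd p = \<gamma>" using p(1) by linarith+
  with p(2) have J0g: "J0 J1 J2 \<gamma> = ereal (c1 + c2)" using c1 c2 by simp
  have "J0 J1 J2 \<gamma> \<le> J0 J1 J2 \<delta>1" by (rule m0)
  also have "\<dots> \<le> JCB J1 J2 \<delta>1" by (rule J0_le_JCB[OF assms(1)])
  finally have ja: "c1 + c2 < a" using assms(9) a J0g unfolding JCB_def
    by (cases "J2 \<delta>1") auto
  define j where "j = c1 + c2"
  have jneg: "j < 0" using c1 c2 j_def by simp
  have cellnn: "0 \<le> cellE J1 J2 \<gamma> v i" for v i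
  proof -
    have "J0 J1 J2 \<gamma> \<le> J0 J1 J2 ((v (i+2) - v i) / 2)" by (rule m0)
    also have "\<dots> \<le> J2 ((v (i+2) - v i) / 2) + ereal (1/2) * J1 (v (i+2) - v (i+1)) + ereal (1/2) * J1 (v (i+1) - v i)"
      by (rule cell_ge[OF assms(1)]) simp
    finally show ?thesis unfolding cellE_def using J0g by (simp add: ereal_le_minus_iff add.commute)
  qed
  have halfa: "ereal (a/2) \<le> ereal (1/2) * J1 x" for x
  proof -
    have "ereal (1/2) * J1 \<delta>1 \<le> ereal (1/2) * J1 x" by (rule ereal_mult_left_mono) (auto simp: m1)
    then show ?thesis using a by simp
  qed
  define vg where "vg = (\<lambda>i::nat. \<gamma> * real i)"
  have vg0: "vg 0 = 0" "vg 1 = \<gamma>" and vgs: "\<And>i. vg (i+1) - vg i = \<gamma>" unfolding vg_def by (auto simp: algebra_simps)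
  have cellg: "cellE J1 J2 \<gamma> vg i = 0" for i
  proof -
    have "(vg (i+2) - vg i) / 2 = \<gamma>" "vg (i+2) - vg (i+1) = \<gamma>" unfolding vg_def by (auto simp: algebra_simps)
    then have e: "J2 ((vg (i+2) - vg i) / 2) = J2 \<gamma>" "J1 (vg (i+2) - vg (i+1)) = J1 \<gamma>"
        "J1 (vg (i+1) - vg i) = J1 \<gamma>" by (simp_all only: vgs)
    show ?thesis unfolding cellE_def e using c1 c2 J0g by simp
  qed
  have limnn: "0 \<le> lim (\<lambda>n. \<Sum>i<n. cellE J1 J2 \<gamma> v i)" for v
  proof -
    let ?X = "\<lambda>n. \<Sum>i<n. cellE J1 J2 \<gamma> v i"
    have inc: "incseq ?X" by (rule incseq_SucI) (simp add: cellnn add_increasing2)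
    have "?X \<longlonglongrightarrow> (SUP n. ?X n)" by (rule LIMSEQ_SUP[OF inc])
    then have "lim ?X = (SUP n. ?X n)" by (rule limI)
    moreover have "?X 0 \<le> (SUP n. ?X n)" by (rule SUP_upper) simp
    ultimately show ?thesis by simp
  qed
  have limg: "lim (\<lambda>n. \<Sum>i<n. cellE J1 J2 \<gamma> vg i) = 0"
    by (simp add: cellg limI)
  have Blo: "ereal (a/2) \<le> Bgam J1 J2 \<gamma>"
    unfolding Bgam_def
  proof (intro INF_greatest)
    fix N v assume "v \<in> {v :: nat \<Rightarrow> real. v 0 = 0 \<and> (\<forall>i \<ge> N. v (i+1) - v i = \<gamma>)}"
    show "ereal (a/2) \<le> ereal (1/2) * J1 (v 1 - v 0) + lim (\<lambda>n. \<Sum>i<n. cellE J1 J2 \<gamma> v i)"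
      using add_mono[OF halfa limnn] by simp
  qed
  have Bhi: "Bgam J1 J2 \<gamma> \<le> ereal (c1/2)"
    unfolding Bgam_def
  proof (rule INF_lower2[of 0], simp, rule INF_lower2[of vg])
    show "vg \<in> {v :: nat \<Rightarrow> real. v 0 = 0 \<and> (\<forall>i \<ge> 0. v (i+1) - v i = \<gamma>)}" using vg0 vgs by auto
    show "ereal (1/2) * J1 (vg 1 - vg 0) + lim (\<lambda>n. \<Sum>i<n. cellE J1 J2 \<gamma> vg i) \<le> ereal (c1/2)"
      using vg0 limg c1 by simp
  qed
  have BIFb: "ereal (a/2) \<le> BIF J1 J2 \<gamma> m \<and> BIF J1 J2 \<gamma> m \<le> ereal (c1/2)" for m
  proof (cases m)
    case infinity
    then show ?thesis using Blo Bhi unfolding BIF_def by simp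
  next
    case (enat m')
    have lo: "ereal (a/2) \<le> ereal (1/2) * J1 (v 1 - v 0) + (\<Sum>i<k. cellE J1 J2 \<gamma> v i)
          + ereal ((2 * real m' + 1) / 2) * (JCB J1 J2 (v (k+1) - v k) - J0 J1 J2 \<gamma>)" for v k
    proof -
      have s: "0 \<le> (\<Sum>i<k. cellE J1 J2 \<gamma> v i)" by (rule sum_nonneg) (simp add: cellnn)
      have "J0 J1 J2 \<gamma> \<le> JCB J1 J2 (v (k+1) - v k)"
        using m0 J0_le_JCB[OF assms(1)] order_trans by blast
      then have "0 \<le> JCB J1 J2 (v (k+1) - v k) - J0 J1 J2 \<gamma>" using J0g by (simp add: ereal_le_minus_iff)
      then have t: "0 \<le> ereal ((2 * real m' + 1) / 2) * (JCB J1 J2 (v (k+1) - v k) - J0 J1 J2 \<gamma>)"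
        by simp
      show ?thesis using add_mono[OF add_mono[OF halfa s] t] by simp
    qed
    have hi: "ereal (1/2) * J1 (vg 1 - vg 0) + (\<Sum>i<0. cellE J1 J2 \<gamma> vg i)
          + ereal ((2 * real m' + 1) / 2) * (JCB J1 J2 (vg (0+1) - vg 0) - J0 J1 J2 \<gamma>) = ereal (c1/2)"
      using vg0 c1 c2 J0g unfolding JCB_def by simp
    show ?thesis unfolding BIF_def enat
      apply (simp only: enat.simps)
      apply (intro conjI INF_greatest lo)
      apply (rule INF_lower2[of 0], simp, rule INF_lower2[of vg])
      using vg0 hi by auto
  qed
  obtain b where b: "Bgam J1 J2 \<gamma> = ereal b" "a/2 \<le> b" "b \<le> c1/2" using ereal_bounded[OF Blo Bhi] by blast
  have BIFr: "\<exists>f. BIF J1 J2 \<gamma> m = ereal f \<and> a/2 \<le> f \<and> f \<le> c1/2" for m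
    using ereal_bounded BIFb by blast
  have J0j: "J0 J1 J2 \<gamma> = ereal j" using J0g j_def by simp
  have ja': "j < a" using ja j_def by simp
  show ?thesis
  proof (intro conjI allI impI)
    fix n :: enat assume n: "n \<ge> 1"
    obtain f where f: "BIF J1 J2 \<gamma> (n-1) = ereal f" "a/2 \<le> f" "f \<le> c1/2" using BIFr by blast
    show "BIFJ J1 J2 \<gamma> n 1 = - J0 J1 J2 \<gamma>"
    proof (cases n)
      case infinity
      then show ?thesis unfolding BIFJ_def BAIF_def using f b J0j jneg ja' by (simp add: min_def)
    next
      case (enat n')
      with n have "n' \<ge> 1" by (simp add: one_enat_def)
      then have "real n' * j \<le> 1 * j" using jneg by (intro mult_right_mono_neg) auto
      moreover have "b - (1/2 + real n')*j = b - j/2 - real n' * j" by (simp add: algebra_simps)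
      ultimately have "b - (1/2 + real n')*j > - j" using b ja' by linarith
      then show ?thesis unfolding BIFJ_def BAIF_def using f b J0j jneg ja' enat by (simp add: min_def)
    qed
  next
    fix k :: enat assume k: "k \<ge> 2"
    obtain f where f: "BIF J1 J2 \<gamma> (1-1) = ereal f" "a/2 \<le> f" "f \<le> c1/2" using BIFr by blast
    show "BIFJ J1 J2 \<gamma> 1 k = Bgam J1 J2 \<gamma> - ereal (3/2) * J0 J1 J2 \<gamma>"
    proof (cases k)
      case infinity
      then show ?thesis unfolding BIFJ_def BAIF_def using f b J0j jneg ja' c1 by (simp add: min_def)
    next
      case (enat k')
      with k have "k' \<ge> 2" by (simp add: numeral_eq_enat)
      then have "real k' * j \<le> 2 * j" using jneg by (intro mult_right_mono_neg) auto
      then have "b - 3 * j / 2 \<le> - (real k' * j)" using b jneg c1 by linarith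
      then show ?thesis unfolding BIFJ_def BAIF_def using f b J0j jneg ja' c1 enat by (simp add: min_def)
    qed
  next
    fix n k :: enat assume n: "n \<ge> 2" and k: "k \<ge> 2"
    obtain f where f: "BIF J1 J2 \<gamma> (n-1) = ereal f" "a/2 \<le> f" "f \<le> c1/2" using BIFr by blast
    have kb: "ereal (-2 * j) \<le> - (ereal_of_enat k * ereal j)"
    proof (cases k)
      case infinity then show ?thesis using jneg by simp
    next
      case (enat k')
      with k have "k' \<ge> 2" by (simp add: numeral_eq_enat)
      then have "real k' * j \<le> 2 * j" using jneg by (intro mult_right_mono_neg) auto
      then show ?thesis using enat by simp
    qed
    have nb: "ereal (f + b - 2 * j) \<le> ereal b - (ereal (1/2) + ereal_of_enat n) * ereal j"
    proof (cases n)
      case infinity then show ?thesis using jneg by simp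
    next
      case (enat n')
      with n have "n' \<ge> 2" by (simp add: numeral_eq_enat)
      then have h: "real n' * j \<le> 2 * j" using jneg by (intro mult_right_mono_neg) auto
      have "j * (real n' * 2) = 2 * (real n' * j)" by simp
      then have "f * 2 + j * (real n' * 2) \<le> j * 3" using h f c1 jneg by linarith
      then show ?thesis using enat f b c1 jneg by (simp add: algebra_simps)
    qed
    have "BAIF J1 J2 \<gamma> n = ereal (f + b - 2 * j)" unfolding BAIF_def using f b J0j by simp
    moreover have "ereal (f + b - 2 * j) \<le> ereal (-2 * j)" using f b c1 by simp
    moreover have "ereal (f + b - 2 * j) \<le> ereal (-2 * j)" using f b c1 by simp
    ultimately have x1: "BAIF J1 J2 \<gamma> n \<le> Bgam J1 J2 \<gamma> - (ereal (1/2) + ereal_of_enat n) * J0 J1 J2 \<gamma>"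
      and x2: "BAIF J1 J2 \<gamma> n \<le> - (ereal_of_enat k * J0 J1 J2 \<gamma>)"
      using kb nb b J0j by (auto intro: order_trans[of _ "ereal (-2 * j)"])
    show "BIFJ J1 J2 \<gamma> n k = BAIF J1 J2 \<gamma> n" unfolding BIFJ_def using x1 x2
      by (simp add: min_def)
  qed
qed

end
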